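(* For $M,N\in\Lambda$, if $M=_{\mathsf v}N$ then $\mathrm{BT}(M)=\mathrm{BT}(N)$.
   Context: Call-by-value $\lambda$-calculus with permutations: $\lambda$-terms and values are $M,N::=V\mid MN$, $V::=x\mid\lambda x.M$, up to $\alpha$-conversion. Rules: $(\beta_v)$ $(\lambda x.M)V\to M\{x:=V\}$ if $V$ is a value; $(\sigma_1)$ $(\lambda x.M)NP\to(\lambda x.MP)N$ if $x\notin\mathrm{FV}(P)$; $(\sigma_3)$ $V((\lambda x.M)N)\to(\lambda x.VM)N$ if $V$ is a value and $x\notin\mathrm{FV}(V)$. $\to_{\mathsf v}$ is their contextual closure, $\twoheadrightarrow_{\mathsf v}$ its reflexive-transitive closure, $=_{\mathsf v}$ its reflexive-symmetric-transitive closure. $\Lambda_\bot$ is the set of $\lambda$-terms possibly containing a constant $\bot$; $\sqsubseteq$ is the smallest context-closed preorder on $\Lambda_\bot$ with $\bot\sqsubseteq x$, $\bot\sqsubseteq\lambda x.M$. Approximants $\mathcal A$ ($k\ge0$): $A::=B\mid C$; $B::=x\mid\lambda x.A\mid\bot\mid xBA_1\cdots A_k$; $C::=(\lambda x.A)(yBA_1\cdots A_k)$. $\mathcal A(M)=\{A\in\mathcal A\mid\exists N\in\Lambda,\ M\twoheadrightarrow_{\mathsf v}N,\ A\sqsubseteq N\}$; the Böhm tree is $\mathrm{BT}(M)=\bigsqcup\mathcal A(M)$ (taken to be $\emptyset$ when $\mathcal A(M)=\emptyset$), so that $\mathrm{BT}(M)=\mathrm{BT}(N)$ iff $\mathcal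 A(M)=\mathcal A(N)$. *)

theory Defs
  imports Main
begin

(* Lambda-terms with an optional constant Bot, in de Bruijn notation
   (this quotients by alpha-conversion). *)
datatype trm = Var nat | Lam trm | App trm trm | Bot

fun no_bot :: "trm \<Rightarrow> bool" where
  "no_bot (Var i) = True"
| "no_bot (Lam t) = no_bot t"
| "no_bot (App s t) = (no_bot s \<and> no_bot t)"
| "no_bot Bot = False"

fun is_value :: "trm \<Rightarrow> bool" where
  "is_value (Var i) = True"
| "is_value (Lam t) = True"
| "is_value (App s t) = False"
| "is_value Bot = False"

fun lift :: "nat \<Rightarrow> trm \<Rightarrow> trm" where
  "lift k (Var i) = (if i < k then Var i else Var (Suc i))"
| "lift k (Lam t) = Lam (lift (Suc k) t)"
| "lift k (App s t) = App (lift k s) (lift k t)"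
| "lift k Bot = Bot"

fun subst :: "trm \<Rightarrow> nat \<Rightarrow> trm \<Rightarrow> trm" where
  "subst (Var i) k s = (if i < k then Var i else if i = k then s else Var (i - 1))"
| "subst (Lam t) k s = Lam (subst t (Suc k) (lift 0 s))"
| "subst (App t u) k s = App (subst t k s) (subst u k s)"
| "subst Bot k s = Bot"

(* one-step reduction ->_v: beta_v, sigma_1, sigma_3 and contextual closure.
   The side conditions x \<notin> FV(P), x \<notin> FV(V) are realised by
   the lifting of P resp. V under the new binder. *)
inductive red :: "trm \<Rightarrow> trm \<Rightarrow> bool" where
  beta_v: "is_value V \<Longrightarrow> red (App (Lam M) V) (subst M 0 V)"
| sigma1: "red (App (App (Lam M) N) P) (App (Lam (App M (lift 0 P))) N)"
| sigma3: "is_value V \<Longrightarrow> red (App V (App (Lam M) N)) (App (Lam (App (lift 0 V) M)) N)"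
| ctx_lam: "red M M' \<Longrightarrow> red (Lam M) (Lam M')"
| ctx_appl: "red M M' \<Longrightarrow> red (App M N) (App M' N)"
| ctx_appr: "red N N' \<Longrightarrow> red (App M N) (App M N')"

definition reds :: "trm \<Rightarrow> trm \<Rightarrow> bool" where
  "reds = red\<^sup>*\<^sup>*"

definition conv :: "trm \<Rightarrow> trm \<Rightarrow> bool" where
  "conv = (\<lambda>a b. no_bot a \<and> no_bot b \<and> (red a b \<or> red b a))\<^sup>*\<^sup>*"

inductive below :: "trm \<Rightarrow> trm \<Rightarrow> bool" where
  bot_var: "below Bot (Var x)"
| bot_lam: "below Bot (Lam M)"
| refl: "below M M"
| trans: "below M N \<Longrightarrow> below N P \<Longrightarrow> below M P"
| lam: "below M M' \<Longrightarrow> below (Lam M) (Lam M')"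
| app: "below M M' \<Longrightarrow> below N N' \<Longrightarrow> below (App M N) (App M' N')"

inductive isA and isB and isHB where
  A_B: "isB t \<Longrightarrow> isA t"
| A_C: "isA A \<Longrightarrow> isHB T \<Longrightarrow> isA (App (Lam A) T)"
| B_var: "isB (Var x)"
| B_lam: "isA A \<Longrightarrow> isB (Lam A)"
| B_bot: "isB Bot"
| B_HB: "isHB T \<Longrightarrow> isB T"
| HB_base: "isB B \<Longrightarrow> isHB (App (Var x) B)"
| HB_app: "isHB T \<Longrightarrow> isA A \<Longrightarrow> isHB (App T A)"

definition approx :: "trm \<Rightarrow> trm set" where
  "approx M = {A. isA A \<and> (\<exists>N. no_bot N \<and> reds M N \<and> below A N)}"

end

theory Submission imports Defs begin

lemma lift_lift: "i \<le> k \<Longrightarrow> lift (Suc k) (lift i t) = lift i (lift k t)"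
  by (induction t arbitrary: i k) auto

lemma lift_subst: "j \<le> i \<Longrightarrow> lift i (subst t j s) = subst (lift (Suc i) t) j (lift i s)"
  by (induction t arbitrary: i j s) (auto simp: lift_lift)

lemma lift_subst_lt: "i \<le> j \<Longrightarrow> lift i (subst t j s) = subst (lift i t) (Suc j) (lift i s)"
  by (induction t arbitrary: i j s) (auto simp: lift_lift)

lemma subst_lift[simp]: "subst (lift k t) k s = t"
  by (induction t arbitrary: k s) auto

lemma subst_subst: "i \<le> j \<Longrightarrow>
  subst (subst t (Suc j) (lift i v)) i (subst u j v) = subst (subst t i u) j v"
proof (induction t arbitrary: i j u v)
  case (Lam t)
  have "lift 0 (lift i v) = lift (Suc i) (lift 0 v)" by (simp add: lift_lift)
  moreover have "subst (lift 0 u) (Suc j) (lift 0 v) = lift 0 (subst u j v)"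
    by (simp add: lift_subst_lt)
  moreover have "subst (subst t (Suc (Suc j)) (lift (Suc i) (lift 0 v))) (Suc i) (subst (lift 0 u) (Suc j) (lift 0 v))
     = subst (subst t (Suc i) (lift 0 u)) (Suc j) (lift 0 v)"
    using Lam.IH[of "Suc i" "Suc j"] Lam.prems by simp
  ultimately show ?case by simp
qed auto

lemma value_lift[simp]: "is_value (lift k V) = is_value V"
  by (cases V) auto

lemma value_subst: "is_value V \<Longrightarrow> is_value N \<Longrightarrow> is_value (subst V k N)"
  by (cases V) auto

section \<open>beta_v\<close>

inductive redb :: "trm \<Rightarrow> trm \<Rightarrow> bool" where
  rb_beta: "is_value V \<Longrightarrow> redb (App (Lam M) V) (subst M 0 V)"
| rb_lam: "redb M M' \<Longrightarrow> redb (Lam M) (Lam M')"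
| rb_appl: "redb M M' \<Longrightarrow> redb (App M N) (App M' N)"
| rb_appr: "redb N N' \<Longrightarrow> redb (App M N) (App M N')"

inductive par :: "trm \<Rightarrow> trm \<Rightarrow> bool" where
  p_var: "par (Var i) (Var i)"
| p_bot: "par Bot Bot"
| p_lam: "par M M' \<Longrightarrow> par (Lam M) (Lam M')"
| p_app: "par M M' \<Longrightarrow> par N N' \<Longrightarrow> par (App M N) (App M' N')"
| p_beta: "par M M' \<Longrightarrow> par V V' \<Longrightarrow> is_value V \<Longrightarrow> par (App (Lam M) V) (subst M' 0 V')"

inductive_cases par_LamE: "par (Lam M) X"
inductive_cases par_VarE: "par (Var i) X"

lemma par_refl[simp]: "par M M"
  by (induction M) (auto intro: par.intros)

lemma par_value: "par V V' \<Longrightarrow> is_value V \<Longrightarrow> is_value V'"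
  by (induction rule: par.induct) auto

lemma par_lift: "par M M' \<Longrightarrow> par (lift k M) (lift k M')"
proof (induction arbitrary: k rule: par.induct)
  case (p_beta M M' V V')
  then show ?case using par.p_beta[of "lift (Suc k) M" "lift (Suc k) M'" "lift k V" "lift k V'"]
    by (simp add: lift_subst)
qed (auto intro: par.intros)

lemma par_subst: "par M M' \<Longrightarrow> par N N' \<Longrightarrow> is_value N \<Longrightarrow> par (subst M k N) (subst M' k N')"
proof (induction arbitrary: k N N' rule: par.induct)
  case (p_var i)
  then show ?case by auto
next
  case p_bot then show ?case by (auto intro: par.intros)
next
  case (p_lam M M') then show ?case by (simp add: par.p_lam par_lift)
next
  case (p_app M M' P P') then show ?case by (auto intro: par.intros)
next
  case (p_beta M M' V V')
  have "par (subst (App (Lam M) V) k N) (subst (subst M' (Suc k) (lift 0 N')) 0 (subst V' k N'))"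
    using p_beta by (simp add: par.p_beta par_lift value_subst)
  then show ?case using subst_subst[of 0 k M' N' V'] by simp
qed

fun cd :: "trm \<Rightarrow> trm" where
  "cd (Var i) = Var i"
| "cd Bot = Bot"
| "cd (Lam M) = Lam (cd M)"
| "cd (App (Lam M) N) = (if is_value N then subst (cd M) 0 (cd N) else App (Lam (cd M)) (cd N))"
| "cd (App M N) = App (cd M) (cd N)"

lemma par_cd: "par M N \<Longrightarrow> par N (cd M)"
proof (induction rule: par.induct)
  case (p_app M M' N N')
  show ?case
  proof (cases "\<exists>A. M = Lam A")
    case True
    then obtain A where A: "M = Lam A" by blast
    with p_app obtain A' where A': "M' = Lam A'" "par A' (cd A)"
      by (auto elim: par_LamE)
    show ?thesis
    proof (cases "is_value N")
      case True
      then show ?thesis using A A' p_app par_value by (auto intro: par.intros)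
    next
      case False
      then show ?thesis using A A' p_app by (auto intro: par.intros)
    qed
  next
    case False
    then have "cd (App M N) = App (cd M) (cd N)" by (cases M) auto
    then show ?thesis using p_app by (auto intro: par.intros)
  qed
next
  case (p_beta M M' V V')
  then show ?case using par_value by (auto intro: par_subst)
qed (auto intro: par.intros)

lemma diamond_confl:
  assumes dia: "\<And>a b c. t a b \<Longrightarrow> t a c \<Longrightarrow> \<exists>d. t b d \<and> t c d"
  shows "t\<^sup>*\<^sup>* a b \<Longrightarrow> t\<^sup>*\<^sup>* a c \<Longrightarrow> \<exists>d. t\<^sup>*\<^sup>* b d \<and> t\<^sup>*\<^sup>* c d"
proof -
  have strip: "t\<^sup>*\<^sup>* a c \<Longrightarrow> t a b \<Longrightarrow> \<exists>d. t\<^sup>*\<^sup>* b d \<and> t c d" for a b c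
  proof (induction rule: rtranclp_induct)
    case base then show ?case by blast
  next
    case (step y z)
    then obtain d where "t\<^sup>*\<^sup>* b d" "t y d" by blast
    moreover from dia[OF this(2) step(2)] obtain e where "t d e" "t z e" by blast
    ultimately show ?case by (meson rtranclp.rtrancl_into_rtrancl)
  qed
  show "t\<^sup>*\<^sup>* a b \<Longrightarrow> t\<^sup>*\<^sup>* a c \<Longrightarrow> \<exists>d. t\<^sup>*\<^sup>* b d \<and> t\<^sup>*\<^sup>* c d"
  proof (induction arbitrary: c rule: rtranclp_induct)
    case base then show ?case by blast
  next
    case (step y z)
    then obtain d where "t\<^sup>*\<^sup>* y d" "t\<^sup>*\<^sup>* c d" by blast
    moreover from strip[OF this(1) step(2)] obtain e where "t\<^sup>*\<^sup>* z e" "t d e" by blast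
    ultimately show ?case by (meson rtranclp.rtrancl_into_rtrancl)
  qed
qed

lemma redb_par: "redb M N \<Longrightarrow> par M N"
  by (induction rule: redb.induct) (auto intro: par.intros)

lemma redbs_lam: "redb\<^sup>*\<^sup>* M M' \<Longrightarrow> redb\<^sup>*\<^sup>* (Lam M) (Lam M')"
  by (induction rule: rtranclp_induct) (auto intro: rtranclp.rtrancl_into_rtrancl redb.intros)
lemma redbs_appl: "redb\<^sup>*\<^sup>* M M' \<Longrightarrow> redb\<^sup>*\<^sup>* (App M N) (App M' N)"
  by (induction rule: rtranclp_induct) (auto intro: rtranclp.rtrancl_into_rtrancl redb.intros)
lemma redbs_appr: "redb\<^sup>*\<^sup>* N N' \<Longrightarrow> redb\<^sup>*\<^sup>* (App M N) (App M N')"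
  by (induction rule: rtranclp_induct) (auto intro: rtranclp.rtrancl_into_rtrancl redb.intros)

lemma par_redbs: "par M N \<Longrightarrow> redb\<^sup>*\<^sup>* M N"
proof (induction rule: par.induct)
  case (p_app M M' N N')
  then show ?case by (meson redbs_appl redbs_appr rtranclp_trans)
next
  case (p_beta M M' V V')
  have "redb\<^sup>*\<^sup>* (App (Lam M) V) (App (Lam M') V')"
    using p_beta by (meson redbs_appl redbs_appr redbs_lam rtranclp_trans)
  moreover have "redb (App (Lam M') V') (subst M' 0 V')"
    using p_beta par_value by (auto intro: redb.intros)
  ultimately show ?case by auto
qed (auto intro: redbs_lam)

lemma redbs_eq_pars: "redb\<^sup>*\<^sup>* = par\<^sup>*\<^sup>*"
proof (intro ext iffI)
  fix a b assume "redb\<^sup>*\<^sup>* a b" then show "par\<^sup>*\<^sup>* a b"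
    by (induction rule: rtranclp_induct) (auto intro: rtranclp.rtrancl_into_rtrancl redb_par)
next
  fix a b assume "par\<^sup>*\<^sup>* a b" then show "redb\<^sup>*\<^sup>* a b"
    by (induction rule: rtranclp_induct) (auto intro: rtranclp_trans par_redbs)
qed

lemma redb_confl: "redb\<^sup>*\<^sup>* a b \<Longrightarrow> redb\<^sup>*\<^sup>* a c \<Longrightarrow> \<exists>d. redb\<^sup>*\<^sup>* b d \<and> redb\<^sup>*\<^sup>* c d"
  unfolding redbs_eq_pars
  by (rule diamond_confl[where t=par]) (use par_cd in blast)+

section \<open>sigma\<close>

inductive rs :: "trm \<Rightarrow> trm \<Rightarrow> bool" where
  rs1: "rs (App (App (Lam M) N) P) (App (Lam (App M (lift 0 P))) N)"
| rs3: "is_value V \<Longrightarrow> rs (App V (App (Lam M) N)) (App (Lam (App (lift 0 V) M)) N)"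
| rs_lam: "rs M M' \<Longrightarrow> rs (Lam M) (Lam M')"
| rs_appl: "rs M M' \<Longrightarrow> rs (App M N) (App M' N)"
| rs_appr: "rs N N' \<Longrightarrow> rs (App M N) (App M N')"

inductive_cases rs_LamE: "rs (Lam M) X"
inductive_cases rs_AppE: "rs (App M N) X"
inductive_cases rs_VarE: "rs (Var i) X"
inductive_cases rs_BotE: "rs Bot X"

lemma rs_value: "rs V V' \<Longrightarrow> is_value V \<Longrightarrow> is_value V'"
  by (induction rule: rs.induct) auto

lemma rs_lift: "rs M N \<Longrightarrow> rs (lift k M) (lift k N)"
proof (induction arbitrary: k rule: rs.induct)
  case (rs1 M N P)
  then show ?case using rs.rs1[of "lift (Suc k) M" "lift k N" "lift k P"] by (simp add: lift_lift)
next
  case (rs3 V M N)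
  then show ?case using rs.rs3[of "lift k V" "lift (Suc k) M" "lift k N"] by (simp add: lift_lift)
qed (auto intro: rs.intros)

lemma rs_subst: "rs M M' \<Longrightarrow> is_value N \<Longrightarrow> rs (subst M k N) (subst M' k N)"
proof (induction arbitrary: k N rule: rs.induct)
  case (rs1 M P Q)
  then show ?case using rs.rs1[of "subst M (Suc k) (lift 0 N)" "subst P k N" "subst Q k N"]
    by (simp add: lift_subst_lt)
next
  case (rs3 V M P)
  then show ?case using rs.rs3[of "subst V k N" "subst M (Suc k) (lift 0 N)" "subst P k N"]
    by (simp add: lift_subst_lt value_subst)
qed (auto intro: rs.intros)

lemma rss_lam: "rs\<^sup>*\<^sup>* M M' \<Longrightarrow> rs\<^sup>*\<^sup>* (Lam M) (Lam M')"
  by (induction rule: rtranclp_induct) (auto intro: rtranclp.rtrancl_into_rtrancl rs.intros)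
lemma rss_appl: "rs\<^sup>*\<^sup>* M M' \<Longrightarrow> rs\<^sup>*\<^sup>* (App M N) (App M' N)"
  by (induction rule: rtranclp_induct) (auto intro: rtranclp.rtrancl_into_rtrancl rs.intros)
lemma rss_appr: "rs\<^sup>*\<^sup>* N N' \<Longrightarrow> rs\<^sup>*\<^sup>* (App M N) (App M N')"
  by (induction rule: rtranclp_induct) (auto intro: rtranclp.rtrancl_into_rtrancl rs.intros)

lemma rs_subst2: "rs V V' \<Longrightarrow> is_value V \<Longrightarrow> rs\<^sup>*\<^sup>* (subst M k V) (subst M k V')"
proof (induction M arbitrary: k V V')
  case (Lam M)
  then show ?case by (simp add: rss_lam rs_lift)
next
  case (App M1 M2)
  then show ?case by simp (meson rss_appl rss_appr rtranclp_trans)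
qed auto

fun w :: "trm \<Rightarrow> nat" where
  "w (Var i) = 2"
| "w Bot = 2"
| "w (Lam M) = Suc (w M)"
| "w (App M N) = w M * (w N)\<^sup>2"

lemma sq4: "2 \<le> (x::nat) \<Longrightarrow> 4 \<le> x\<^sup>2"
proof -
  assume "2 \<le> x"
  then have "2 * 2 \<le> x * x" using mult_le_mono by blast
  then show ?thesis by (simp add: power2_eq_square)
qed

lemma w_ge: "2 \<le> w M"
proof (induction M)
  case (App M1 M2)
  then have "2 * 1 \<le> w M1 * (w M2)\<^sup>2"
    using sq4[of "w M2"] by (intro mult_le_mono) auto
  then show ?case by simp
qed auto

lemma w_lift[simp]: "w (lift k M) = w M"
  by (induction M arbitrary: k) auto

lemma rs_w: "rs M N \<Longrightarrow> w N < w M"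
proof (induction rule: rs.induct)
  case (rs1 M N P)
  have a: "2 \<le> w P" "2 \<le> w N" by (rule w_ge)+
  let ?m = "w M" and ?n = "(w N)\<^sup>2" and ?p = "(w P)\<^sup>2"
  have "?p \<ge> 4" "?n \<ge> 4" using a by (auto intro: sq4) 
  then have "(?m * ?p + 1) * ?n < (?m + 1) * ?n * ?p" using a by (simp add: algebra_simps)
  then show ?case by simp
next
  case (rs3 V M N)
  have a: "2 \<le> w V" "2 \<le> w N" by (rule w_ge)+
  let ?m = "w M" and ?n = "(w N)\<^sup>2" and ?v = "w V"
  have n4: "?n \<ge> 4" using a by (auto intro: sq4)
  have "?v * ?m\<^sup>2 + 1 < ?v * (?m + 1)\<^sup>2 * ?n"
  proof -
    have "?v * ?m\<^sup>2 + 1 < ?v * (?m + 1)\<^sup>2" using a by (simp add: power2_eq_square algebra_simps)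
    also have "\<dots> \<le> ?v * (?m + 1)\<^sup>2 * ?n" using n4 by simp
    finally show ?thesis .
  qed
  then have "(?v * ?m\<^sup>2 + 1) * ?n < (?v * (?m + 1)\<^sup>2 * ?n) * ?n"
    by (rule mult_less_mono1) (use n4 a in auto)
  moreover have "w (App V (App (Lam M) N)) = (?v * (?m + 1)\<^sup>2 * ?n) * ?n"
    by (simp add: power_mult_distrib power2_eq_square algebra_simps)
  moreover have "w (App (Lam (App (lift 0 V) M)) N) = (?v * ?m\<^sup>2 + 1) * ?n"
    by simp
  ultimately show ?case by (simp only:)
next
  case (rs_appl M M' N)
  have "0 < (w N)\<^sup>2" using w_ge[of N] by simp
  then show ?case using rs_appl by simp
next
  case (rs_appr N N' M)
  have "0 < w M" using w_ge[of M] by simp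
  moreover have "(w N')\<^sup>2 < (w N)\<^sup>2" using rs_appr by (simp add: power_strict_mono)
  ultimately show ?case by simp
qed auto

definition sj :: "trm \<Rightarrow> trm \<Rightarrow> bool" where
  "sj a b = (\<exists>q. rs\<^sup>*\<^sup>* a q \<and> rs\<^sup>*\<^sup>* b q)"

lemma sj_sym: "sj a b \<Longrightarrow> sj b a" unfolding sj_def by blast

lemma sj_intro: "rs\<^sup>*\<^sup>* a q \<Longrightarrow> rs\<^sup>*\<^sup>* b q \<Longrightarrow> sj a b" unfolding sj_def by blast

lemma rs2: "rs a b \<Longrightarrow> rs b c \<Longrightarrow> rs\<^sup>*\<^sup>* a c" by auto

lemma lc_s1:
  assumes "rs (App (App (Lam A) B) C) X"
  shows "sj (App (Lam (App A (lift 0 C))) B) X"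
  using assms
proof cases
  case rs1 then show ?thesis by (auto simp: sj_def)
next
  case (rs_appl Y)
  then have Y: "rs (App (Lam A) B) Y" and X: "X = App Y C" by auto
  from Y show ?thesis
  proof cases
    case (rs3 M D)
    then have e: "B = App (Lam M) D" "Y = App (Lam (App (lift 0 (Lam A)) M)) D" by auto
    let ?Q = "App (Lam (App (Lam (App (lift 1 A) (lift 0 (lift 0 C)))) M)) D"
    have "rs (App (Lam (App A (lift 0 C))) B) ?Q"
      using rs.rs3[of "Lam (App A (lift 0 C))" M D] e by (simp add: lift_lift)
    moreover have "rs X (App (Lam (App (App (Lam (lift 1 A)) M) (lift 0 C))) D)"
      using X e rs.rs1 by simp
    moreover have "rs (App (Lam (App (App (Lam (lift 1 A)) M) (lift 0 C))) D) ?Q"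
      by (intro rs.intros)
    ultimately show ?thesis by (meson sj_intro r_into_rtranclp rs2)
  next
    case (rs_appl L')
    then obtain A' where A': "L' = Lam A'" "rs A A'" by (auto elim: rs_LamE)
    show ?thesis
      by (rule sj_intro[of _ "App (Lam (App A' (lift 0 C))) B"])
         (use rs_appl A' X in \<open>auto intro: rs.intros\<close>)
  next
    case (rs_appr B')
    show ?thesis
      by (rule sj_intro[of _ "App (Lam (App A (lift 0 C))) B'"])
         (use rs_appr X in \<open>auto intro: rs.intros\<close>)
  qed
next
  case (rs_appr C')
  show ?thesis
    by (rule sj_intro[of _ "App (Lam (App A (lift 0 C'))) B"])
       (use rs_appr in \<open>auto intro!: r_into_rtranclp rs.intros rs_lift\<close>)
qed auto

lemma lc_s3:
  assumes v: "is_value V" and "rs (App V (App (Lam A) B)) X"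
  shows "sj (App (Lam (App (lift 0 V) A)) B) X"
  using assms(2)
proof cases
  case rs1 then show ?thesis using v by auto
next
  case rs3 then show ?thesis by (auto simp: sj_def)
next
  case (rs_appl V')
  then have "is_value V'" using rs_value v by auto
  then show ?thesis
    by (intro sj_intro[of _ "App (Lam (App (lift 0 V') A)) B"])
       (use rs_appl in \<open>auto intro!: r_into_rtranclp rs.intros rs_lift\<close>)
next
  case (rs_appr Y)
  then have Y: "rs (App (Lam A) B) Y" and X: "X = App V Y" by auto
  from Y show ?thesis
  proof cases
    case (rs3 M D)
    then have e: "B = App (Lam M) D" "Y = App (Lam (App (lift 0 (Lam A)) M)) D" by auto
    let ?Q = "App (Lam (App (Lam (App (lift 0 (lift 0 V)) (lift 1 A))) M)) D"
    have "rs (App (Lam (App (lift 0 V) A)) B) ?Q"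
      using rs.rs3[of "Lam (App (lift 0 V) A)" M D] e by (simp add: lift_lift)
    moreover have "rs X (App (Lam (App (lift 0 V) (App (Lam (lift 1 A)) M))) D)"
      using X e rs.rs3 v by simp
    moreover have "rs (App (Lam (App (lift 0 V) (App (Lam (lift 1 A)) M))) D) ?Q"
      using v by (intro rs.intros) simp
    ultimately show ?thesis by (meson sj_intro r_into_rtranclp rs2)
  next
    case (rs_appl L')
    then obtain A' where A': "L' = Lam A'" "rs A A'" by (auto elim: rs_LamE)
    show ?thesis
      by (rule sj_intro[of _ "App (Lam (App (lift 0 V) A')) B"])
         (use rs_appl A' X v in \<open>auto intro: rs.intros\<close>)
  next
    case (rs_appr B')
    show ?thesis
      by (rule sj_intro[of _ "App (Lam (App (lift 0 V) A)) B'"])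
         (use rs_appr X v in \<open>auto intro: rs.intros\<close>)
  qed
qed

lemma rs_lc: "rs M N1 \<Longrightarrow> rs M N2 \<Longrightarrow> sj N1 N2"
proof (induction arbitrary: N2 rule: rs.induct)
  case (rs1 M N P) then show ?case by (rule lc_s1)
next
  case (rs3 V M N) then show ?case by (rule lc_s3)
next
  case (rs_lam M M')
  then obtain M'' where "N2 = Lam M''" "rs M M''" by (auto elim: rs_LamE)
  with rs_lam show ?case unfolding sj_def by (meson rss_lam)
next
  case (rs_appl M M' N)
  from rs_appl.prems show ?case
  proof cases
    case (rs1 A B)
    then show ?thesis using lc_s1 rs_appl sj_sym by (metis rs.rs_appl)
  next
    case (rs3 A B)
    then show ?thesis using lc_s3 rs_appl sj_sym by (metis rs.rs_appl)
  next
    case (rs_appl M'')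
    then show ?thesis using rs_appl.IH unfolding sj_def by (meson rss_appl)
  next
    case (rs_appr N')
    then show ?thesis using rs_appl.hyps
      by (intro sj_intro[of _ "App M' N'"]) (auto intro: rs.intros)
  qed
next
  case (rs_appr N N' M)
  from rs_appr.prems show ?case
  proof cases
    case (rs1 A B)
    then show ?thesis using lc_s1 rs_appr sj_sym by (metis rs.rs_appr)
  next
    case (rs3 A B)
    then show ?thesis using lc_s3 rs_appr sj_sym by (metis rs.rs_appr)
  next
    case (rs_appr N'')
    then show ?thesis using rs_appr.IH unfolding sj_def by (meson rss_appr)
  next
    case (rs_appl M')
    then show ?thesis using rs_appr.hyps
      by (intro sj_intro[of _ "App M' N'"]) (auto intro: rs.intros)
  qed
qed

lemma newman:
  assumes wf: "wfp (\<lambda>y x. r x y)"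
    and lc: "\<And>a b c. r a b \<Longrightarrow> r a c \<Longrightarrow> \<exists>d. r\<^sup>*\<^sup>* b d \<and> r\<^sup>*\<^sup>* c d"
  shows "r\<^sup>*\<^sup>* a b \<Longrightarrow> r\<^sup>*\<^sup>* a c \<Longrightarrow> \<exists>d. r\<^sup>*\<^sup>* b d \<and> r\<^sup>*\<^sup>* c d"
  using wf
proof (induction a arbitrary: b c rule: wfp_induct_rule)
  case (less a)
  show ?case
  proof (cases "a = b \<or> a = c")
    case True then show ?thesis using less by blast
  next
    case False
    then obtain b1 c1 where b1: "r a b1" "r\<^sup>*\<^sup>* b1 b" and c1: "r a c1" "r\<^sup>*\<^sup>* c1 c"
      using less(2,3) by (metis converse_rtranclpE)
    obtain d where d: "r\<^sup>*\<^sup>* b1 d" "r\<^sup>*\<^sup>* c1 d" using lc[OF b1(1) c1(1)] by blast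
    obtain e where e: "r\<^sup>*\<^sup>* b e" "r\<^sup>*\<^sup>* d e" using less(1)[OF b1(1) b1(2) d(1)] by blast
    have "r\<^sup>*\<^sup>* c1 e" using d(2) e(2) by auto
    then obtain f where "r\<^sup>*\<^sup>* c f" "r\<^sup>*\<^sup>* e f" using less(1)[OF c1(1) c1(2)] by blast
    then show ?thesis using e(1) by (meson rtranclp_trans)
  qed
qed

lemma rs_confl: "rs\<^sup>*\<^sup>* a b \<Longrightarrow> rs\<^sup>*\<^sup>* a c \<Longrightarrow> \<exists>d. rs\<^sup>*\<^sup>* b d \<and> rs\<^sup>*\<^sup>* c d"
proof (rule newman)
  show "wfp (\<lambda>y x. rs x y)"
  proof (rule wfp_if_convertible_to_nat)
    show "\<And>x y. rs y x \<Longrightarrow> w x < w y" by (rule rs_w)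
  qed
qed (use rs_lc sj_def in blast)

section \<open>commutation\<close>

lemma redb_value: "redb V V' \<Longrightarrow> is_value V \<Longrightarrow> is_value V'"
  by (induction rule: redb.induct) auto

lemma redb_lift: "redb M N \<Longrightarrow> redb (lift k M) (lift k N)"
proof (induction arbitrary: k rule: redb.induct)
  case (rb_beta V M)
  then show ?case using redb.rb_beta[of "lift k V" "lift (Suc k) M"] by (simp add: lift_subst)
qed (auto intro: redb.intros)

inductive_cases redb_LamE: "redb (Lam M) X"

lemma comm1: "rs M N \<Longrightarrow> redb M P \<Longrightarrow> \<exists>Q. (N = Q \<or> redb N Q) \<and> rs\<^sup>*\<^sup>* P Q"
proof (induction arbitrary: P rule: rs.induct)
  case (rs1 A B C)
  from rs1.prems show ?case
  proof cases
    case (rb_appl Y)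
    then have Y: "redb (App (Lam A) B) Y" by simp
    from Y show ?thesis
    proof cases
      case rb_beta
      then show ?thesis using rb_appl redb.rb_beta[of B "App A (lift 0 C)"] by auto
    next
      case (rb_appl L')
      then obtain A' where A': "L' = Lam A'" "redb A A'" by (auto elim: redb_LamE)
      show ?thesis using rb_appl A' \<open>P = App Y C\<close>
        by (intro exI[of _ "App (Lam (App A' (lift 0 C))) B"]) (auto intro: redb.intros rs.intros)
    next
      case (rb_appr B')
      show ?thesis using rb_appr \<open>P = App Y C\<close>
        by (intro exI[of _ "App (Lam (App A (lift 0 C))) B'"]) (auto intro: redb.intros rs.intros)
    qed
  next
    case (rb_appr C')
    show ?thesis using rb_appr
      by (intro exI[of _ "App (Lam (App A (lift 0 C'))) B"]) (auto intro: redb.intros rs.intros redb_lift)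
  qed
next
  case (rs3 V A B)
  from rs3.prems show ?case
  proof cases
    case (rb_appl V')
    then have "is_value V'" using redb_value rs3 by auto
    then show ?thesis using rb_appl
      by (intro exI[of _ "App (Lam (App (lift 0 V') A)) B"]) (auto intro: redb.intros rs.intros redb_lift)
  next
    case (rb_appr Y)
    then have Y: "redb (App (Lam A) B) Y" by simp
    from Y show ?thesis
    proof cases
      case rb_beta
      then show ?thesis using rb_appr redb.rb_beta[of B "App (lift 0 V) A"] by auto
    next
      case (rb_appl L')
      then obtain A' where A': "L' = Lam A'" "redb A A'" by (auto elim: redb_LamE)
      show ?thesis using rb_appl A' \<open>P = App V Y\<close> rs3
        by (intro exI[of _ "App (Lam (App (lift 0 V) A')) B"]) (auto intro: redb.intros rs.intros)
    next
      case (rb_appr B')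
      show ?thesis using rb_appr \<open>P = App V Y\<close> rs3
        by (intro exI[of _ "App (Lam (App (lift 0 V) A)) B'"]) (auto intro: redb.intros rs.intros)
    qed
  qed simp
next
  case (rs_lam M M')
  then obtain P' where "P = Lam P'" "redb M P'" by (auto elim: redb_LamE)
  with rs_lam.IH obtain Q where "M' = Q \<or> redb M' Q" "rs\<^sup>*\<^sup>* P' Q" by blast
  then show ?case using \<open>P = Lam P'\<close>
    by (intro exI[of _ "Lam Q"]) (auto intro: redb.intros rss_lam)
next
  case (rs_appl M M' N)
  from rs_appl.prems show ?case
  proof cases
    case (rb_beta A)
    then obtain A' where A': "M' = Lam A'" "rs A A'" using rs_appl by (auto elim: rs_LamE)
    show ?thesis using rb_beta A'
      by (intro exI[of _ "subst A' 0 N"]) (auto intro: redb.intros rs_subst)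
  next
    case (rb_appl M'')
    with rs_appl.IH obtain Q where "M' = Q \<or> redb M' Q" "rs\<^sup>*\<^sup>* M'' Q" by blast
    then show ?thesis using rb_appl
      by (intro exI[of _ "App Q N"]) (auto intro: redb.intros rss_appl)
  next
    case (rb_appr N'')
    then show ?thesis using rs_appl
      by (intro exI[of _ "App M' N''"]) (auto intro: redb.intros rs.intros)
  qed
next
  case (rs_appr N N' M)
  from rs_appr.prems show ?case
  proof cases
    case (rb_beta A)
    then have "is_value N'" using rs_value rs_appr by auto
    then show ?thesis using rb_beta rs_appr
      by (intro exI[of _ "subst A 0 N'"]) (auto intro: redb.intros rs_subst2)
  next
    case (rb_appr N'')
    with rs_appr.IH obtain Q where "N' = Q \<or> redb N' Q" "rs\<^sup>*\<^sup>* N'' Q" by blast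
    then show ?thesis using rb_appr
      by (intro exI[of _ "App M Q"]) (auto intro: redb.intros rss_appr)
  next
    case (rb_appl M'')
    then show ?thesis using rs_appr
      by (intro exI[of _ "App M'' N'"]) (auto intro: redb.intros rs.intros)
  qed
qed

lemma comm_a: "rs\<^sup>*\<^sup>* M N \<Longrightarrow> redb M P \<Longrightarrow> \<exists>Q. (N = Q \<or> redb N Q) \<and> rs\<^sup>*\<^sup>* P Q"
proof (induction rule: rtranclp_induct)
  case base then show ?case by blast
next
  case (step Y Z)
  then obtain Q1 where Q1: "Y = Q1 \<or> redb Y Q1" "rs\<^sup>*\<^sup>* P Q1" by blast
  show ?case
  proof (cases "Y = Q1")
    case True then show ?thesis using Q1 step(2) by (intro exI[of _ Z]) auto
  next
    case False
    then obtain Q2 where "Z = Q2 \<or> redb Z Q2" "rs\<^sup>*\<^sup>* Q1 Q2" using comm1[OF step(2)] Q1 by blast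
    then show ?thesis using Q1(2) by (intro exI[of _ Q2]) (auto intro: rtranclp_trans)
  qed
qed

lemma comm_b: "redb\<^sup>*\<^sup>* M P \<Longrightarrow> rs\<^sup>*\<^sup>* M N \<Longrightarrow> \<exists>Q. redb\<^sup>*\<^sup>* N Q \<and> rs\<^sup>*\<^sup>* P Q"
proof (induction rule: rtranclp_induct)
  case base then show ?case by blast
next
  case (step Y Z)
  then obtain Q1 where Q1: "redb\<^sup>*\<^sup>* N Q1" "rs\<^sup>*\<^sup>* Y Q1" by blast
  obtain Q2 where Q2: "Q1 = Q2 \<or> redb Q1 Q2" "rs\<^sup>*\<^sup>* Z Q2" using comm_a[OF Q1(2) step(2)] by blast
  have "redb\<^sup>*\<^sup>* N Q2" using Q2(1) Q1(1) by (auto intro: rtranclp.rtrancl_into_rtrancl)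
  then show ?case using Q2(2) by blast
qed

lemma red_split: "red M N \<longleftrightarrow> redb M N \<or> rs M N"
proof
  show "red M N \<Longrightarrow> redb M N \<or> rs M N"
  proof (induction rule: red.induct)
    case (ctx_lam M M') then show ?case using redb.rb_lam rs.rs_lam by blast
  next
    case (ctx_appl M M' N) then show ?case using redb.rb_appl rs.rs_appl by blast
  next
    case (ctx_appr N N' M) then show ?case using redb.rb_appr rs.rs_appr by blast
  qed (auto intro: redb.rb_beta rs.rs1 rs.rs3)
next
  have a: "redb M N \<Longrightarrow> red M N" for M N by (induction rule: redb.induct) (auto intro: red.intros)
  have b: "rs M N \<Longrightarrow> red M N" for M N by (induction rule: rs.induct) (auto intro: red.intros)
  show "redb M N \<or> rs M N \<Longrightarrow> red M N" using a b by blast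
qed

lemma rtranclp_mono_pred:
  assumes "\<And>x y. r x y \<Longrightarrow> s x y" and "r\<^sup>*\<^sup>* a b" shows "s\<^sup>*\<^sup>* a b"
  using assms(2) by (induction rule: rtranclp_induct) (auto intro: rtranclp.rtrancl_into_rtrancl assms(1))

lemma red_confl: "red\<^sup>*\<^sup>* a b \<Longrightarrow> red\<^sup>*\<^sup>* a c \<Longrightarrow> \<exists>d. red\<^sup>*\<^sup>* b d \<and> red\<^sup>*\<^sup>* c d"
proof -
  define t where "t = (\<lambda>x y. redb\<^sup>*\<^sup>* x y \<or> rs\<^sup>*\<^sup>* x y)"
  have dia: "t x y \<Longrightarrow> t x z \<Longrightarrow> \<exists>d. t y d \<and> t z d" for x y z
  proof -
    assume 1: "t x y" and 2: "t x z"
    show ?thesis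
    proof (cases "redb\<^sup>*\<^sup>* x y")
      case y: True
      show ?thesis
      proof (cases "redb\<^sup>*\<^sup>* x z")
        case True
        then obtain d where "redb\<^sup>*\<^sup>* y d" "redb\<^sup>*\<^sup>* z d" using redb_confl[OF y] by blast
        then show ?thesis unfolding t_def by blast
      next
        case False
        then have "rs\<^sup>*\<^sup>* x z" using 2 unfolding t_def by blast
        then obtain d where "redb\<^sup>*\<^sup>* z d" "rs\<^sup>*\<^sup>* y d" using comm_b[OF y] by blast
        then show ?thesis unfolding t_def by blast
      qed
    next
      case False
      then have y: "rs\<^sup>*\<^sup>* x y" using 1 unfolding t_def by blast
      show ?thesis
      proof (cases "redb\<^sup>*\<^sup>* x z")
        case True
        then obtain d where "redb\<^sup>*\<^sup>* y d" "rs\<^sup>*\<^sup>* z d" using comm_b[OF True y] by blast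
        then show ?thesis unfolding t_def by blast
      next
        case False
        then have "rs\<^sup>*\<^sup>* x z" using 2 unfolding t_def by blast
        then obtain d where "rs\<^sup>*\<^sup>* y d" "rs\<^sup>*\<^sup>* z d" using rs_confl[OF y] by blast
        then show ?thesis unfolding t_def by blast
      qed
    qed
  qed
  have t1: "red\<^sup>*\<^sup>* x y \<Longrightarrow> t\<^sup>*\<^sup>* x y" for x y
    by (erule rtranclp_mono_pred[rotated]) (auto simp: t_def red_split)
  have t2: "t\<^sup>*\<^sup>* x y \<Longrightarrow> red\<^sup>*\<^sup>* x y" for x y
  proof (induction rule: rtranclp_induct)
    case (step y z)
    have r1: "redb\<^sup>*\<^sup>* y z \<Longrightarrow> red\<^sup>*\<^sup>* y z"
      by (erule rtranclp_mono_pred[rotated]) (simp add: red_split)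
    have r2: "rs\<^sup>*\<^sup>* y z \<Longrightarrow> red\<^sup>*\<^sup>* y z"
      by (erule rtranclp_mono_pred[rotated]) (simp add: red_split)
    have "red\<^sup>*\<^sup>* y z" using step(2) r1 r2 unfolding t_def by blast
    then show ?case using step(3) by auto
  qed auto
  assume "red\<^sup>*\<^sup>* a b" "red\<^sup>*\<^sup>* a c"
  then have tab: "t\<^sup>*\<^sup>* a b" and tac: "t\<^sup>*\<^sup>* a c" using t1 by auto
  have "\<exists>d. t\<^sup>*\<^sup>* b d \<and> t\<^sup>*\<^sup>* c d" by (rule diamond_confl[of t, OF dia tab tac])
  then obtain d where "t\<^sup>*\<^sup>* b d" "t\<^sup>*\<^sup>* c d" by blast
  then have "red\<^sup>*\<^sup>* b d" "red\<^sup>*\<^sup>* c d" using t2 by simp_all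
  then show ?thesis by blast
qed

section \<open>approximants\<close>

fun le :: "trm \<Rightarrow> trm \<Rightarrow> bool" where
  "le Bot t = (t = Bot \<or> is_value t)"
| "le (Var i) t = (t = Var i)"
| "le (Lam a) t = (\<exists>b. t = Lam b \<and> le a b)"
| "le (App a c) t = (\<exists>b d. t = App b d \<and> le a b \<and> le c d)"

lemma le_Lam[simp]: "le a (Lam M) \<longleftrightarrow> a = Bot \<or> (\<exists>a'. a = Lam a' \<and> le a' M)"
  by (cases a) auto
lemma le_App[simp]: "le a (App M N) \<longleftrightarrow> (\<exists>a1 a2. a = App a1 a2 \<and> le a1 M \<and> le a2 N)"
  by (cases a) auto
lemma le_Var[simp]: "le a (Var i) \<longleftrightarrow> a = Bot \<or> a = Var i"
  by (cases a) auto
lemma le_BotR[simp]: "le a Bot \<longleftrightarrow> a = Bot"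
  by (cases a) auto

declare le.simps(2-4)[simp del]

lemma le_refl: "le t t"
  by (induction t) (auto simp: le.simps)

lemma le_trans: "le a b \<Longrightarrow> le b c \<Longrightarrow> le a c"
proof (induction c arbitrary: a b)
  case (Var i) then show ?case by auto
next
  case (Lam c) then show ?case by fastforce
next
  case (App c1 c2) then show ?case by fastforce
next
  case Bot then show ?case by auto
qed

lemma below_le: "below A N \<Longrightarrow> le A N"
  by (induction rule: below.induct) (auto intro: le_refl le_trans)

lemma le_below: "le A N \<Longrightarrow> below A N"
proof (induction N arbitrary: A)
  case (Var i) then show ?case by (auto intro: below.intros)
next
  case (Lam M) then show ?case by (auto intro: below.intros)
next
  case (App M N) then show ?case by (auto intro: below.intros)
next
  case Bot then show ?case by (auto intro: below.intros)
qed

fun nla :: "trm \<Rightarrow> bool" where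
  "nla (App (Lam a) b) = False"
| "nla t = True"

fun hv :: "trm \<Rightarrow> bool" where
  "hv (Var i) = True"
| "hv (App s t) = hv s"
| "hv t = False"

fun okt :: "trm \<Rightarrow> bool" where
  "okt (Var i) = True"
| "okt Bot = True"
| "okt (Lam a) = okt a"
| "okt (App s t) = (okt s \<and> okt t \<and> s \<noteq> Bot \<and> (\<forall>a b. s \<noteq> App (Lam a) b)
     \<and> ((\<exists>a. s = Lam a) \<longrightarrow> (\<exists>a b. t = App a b)) \<and> (is_value s \<longrightarrow> nla t))"

lemma approx_okt:
  shows "isA t \<Longrightarrow> okt t"
    and "isB t \<Longrightarrow> okt t \<and> nla t"
    and "isHB t \<Longrightarrow> okt t \<and> (\<exists>a b. t = App a b) \<and> hv t \<and> nla t"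
proof (induction rule: isA_isB_isHB.inducts)
  case (A_C A T)
  then show ?case by (cases T) auto
next
  case (HB_app T A)
  then show ?case by (cases T) (auto elim: hv.elims)
qed auto

lemma stable: "red N K \<Longrightarrow> le A N \<Longrightarrow> okt A \<Longrightarrow> le A K"
proof (induction arbitrary: A rule: red.induct)
  case (beta_v V M)
  then show ?case by (cases V) auto
next
  case (sigma1 M N P)
  then show ?case by auto
next
  case (sigma3 V M N)
  then show ?case by (cases V) auto
next
  case (ctx_lam M M')
  then show ?case by auto
next
  case (ctx_appl M M' N)
  then show ?case by auto
next
  case (ctx_appr N N' M)
  then show ?case by auto
qed

lemma stables: "red\<^sup>*\<^sup>* N K \<Longrightarrow> le A N \<Longrightarrow> okt A \<Longrightarrow> le A K"
  by (induction rule: rtranclp_induct) (auto intro: stable)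

lemma no_bot_lift[simp]: "no_bot (lift k t) = no_bot t"
  by (induction t arbitrary: k) auto

lemma no_bot_subst: "no_bot t \<Longrightarrow> no_bot s \<Longrightarrow> no_bot (subst t k s)"
  by (induction t arbitrary: k s) auto

lemma red_no_bot: "red N K \<Longrightarrow> no_bot N \<Longrightarrow> no_bot K"
  by (induction rule: red.induct) (auto intro: no_bot_subst)

lemma reds_no_bot: "red\<^sup>*\<^sup>* N K \<Longrightarrow> no_bot N \<Longrightarrow> no_bot K"
  by (induction rule: rtranclp_induct) (auto intro: red_no_bot)

lemma approx_red: "red\<^sup>*\<^sup>* M L \<Longrightarrow> approx M = approx L"
proof
  assume hML: "red\<^sup>*\<^sup>* M L"
  show "approx L \<subseteq> approx M"
    using hML unfolding approx_def reds_def by (auto intro: rtranclp_trans)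
  show "approx M \<subseteq> approx L"
  proof
    fix A assume "A \<in> approx M"
    then obtain N where A: "isA A" "no_bot N" "red\<^sup>*\<^sup>* M N" "below A N"
      unfolding approx_def reds_def by blast
    obtain K where K: "red\<^sup>*\<^sup>* N K" "red\<^sup>*\<^sup>* L K" using red_confl[OF A(3) hML] by blast
    have "le A K" using stables[OF K(1) below_le[OF A(4)] approx_okt(1)[OF A(1)]] .
    moreover have "no_bot K" using reds_no_bot K(1) A(2) by blast
    ultimately show "A \<in> approx L" using A(1) K(2) le_below unfolding approx_def reds_def by blast
  qed
qed

lemma conv_join: "conv M N \<Longrightarrow> \<exists>L. red\<^sup>*\<^sup>* M L \<and> red\<^sup>*\<^sup>* N L"
  unfolding conv_def
proof (induction rule: rtranclp_induct)
  case base then show ?case by blast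
next
  case (step y z)
  then obtain L where L: "red\<^sup>*\<^sup>* M L" "red\<^sup>*\<^sup>* y L" by blast
  from step(2) have "red y z \<or> red z y" by blast
  then show ?case
  proof
    assume "red y z"
    then obtain L' where "red\<^sup>*\<^sup>* L L'" "red\<^sup>*\<^sup>* z L'" using red_confl[OF L(2)] by blast
    then show ?thesis using L(1) by (meson rtranclp_trans)
  next
    assume "red z y"
    then show ?thesis using L by (meson converse_rtranclp_into_rtranclp)
  qed
qed

theorem proposition2p11:
  assumes "no_bot M" and "no_bot N" and "conv M N"
  shows "approx M = approx N"
proof -
  obtain L where "red\<^sup>*\<^sup>* M L" "red\<^sup>*\<^sup>* N L" using conv_join[OF assms(3)] by blast
  then show ?thesis using approx_red by metis
qed

end
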